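(* Let $\mathcal{D}\subset\mathbb{R}^d$ be a bounded domain, and let $\mathrm{Re}>0$, $\mathrm{We}>0$, $\varepsilon\in(0,1)$. Let $(\mathbf{u},p,\boldsymbol{\tau})$ be a regular (smooth) solution on $[0,\infty)\times\mathcal{D}$ of the Oldroyd-B system $$\mathrm{Re}\left(\frac{\partial \mathbf{u}}{\partial t}+\mathbf{u}\cdot\nabla\mathbf{u}\right)=(1-\varepsilon)\Delta\mathbf{u}-\nabla p+\operatorname{div}\boldsymbol{\tau},\qquad \operatorname{div}\mathbf{u}=0,$$ $$\frac{\partial \boldsymbol{\tau}}{\partial t}+\mathbf{u}\cdot\nabla\boldsymbol{\tau}=\nabla\mathbf{u}\,\boldsymbol{\tau}+\boldsymbol{\tau}(\nabla\mathbf{u})^T-\frac{1}{\mathrm{We}}\boldsymbol{\tau}+\frac{\varepsilon}{\mathrm{We}}\left(\nabla\mathbf{u}+(\nabla\mathbf{u})^T\right),$$ with $\mathbf{u}=0$ on $\partial\mathcal{D}$, and let $\mathbf{A}=\frac{\mathrm{We}}{\varepsilon}\boldsymbol{\tau}+\mathbf{I}$ be the conformation tensor, so that $$\frac{\partial \mathbf{A}}{\partial t}+\mathbf{u}\cdot\nabla\mathbf{A}=\nabla\mathbf{u}\,\mathbf{A}+\mathbf{A}(\nabla\mathbf{u})^T-\frac{1}{\mathrm{We}}\mathbf{A}+\frac{1}{\mathrm{We}}\mathbf{I}.$$ Assume $\mathbf{A}(t=0)$ is a symmetric positive definite matrix at every point of $\mathcal{D}$ and that $\det\mathbf{A}(t=0)>1$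 on $\mathcal{D}$. Then for all $t\ge 0$, $\det\mathbf{A}(t)>1$ on $\mathcal{D}$, and consequently $\operatorname{tr}\boldsymbol{\tau}(t)>0$ on $\mathcal{D}$.
   Context: $\nabla\mathbf{u}$ denotes the velocity gradient matrix, $\mathbf{I}$ the $d\times d$ identity matrix. It is assumed that the solution is regular enough that $\mathbf{A}(t)$ stays symmetric positive definite for all $t\ge0$ (this property is propagated by the equation for $\mathbf{A}$). *)

theory Defs
  imports "HOL-Analysis.Analysis"
begin

text \<open>Fields are functions of the space-time point z = (t, x), t real, x in R^d,
  where R^d is modelled as real^'n (d = CARD('n)).
  Matrices are real^'n^'n; M $ i $ j is the (i,j) entry.\<close>

type_synonym 'n stp = "real \<times> (real^'n)"

definition C1_on ::
  "('a::real_normed_vector \<Rightarrow> 'b::real_normed_vector) \<Rightarrow> ('a \<Rightarrow> 'a \<Rightarrow>\<^sub>L 'b) \<Rightarrow> 'a set \<Rightarrow> bool" where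
  "C1_on f f' S \<longleftrightarrow>
     (\<forall>z\<in>S. (f has_derivative blinfun_apply (f' z)) (at z within S)) \<and> continuous_on S f'"

definition C2_on ::
  "('a::real_normed_vector \<Rightarrow> 'b::real_normed_vector) \<Rightarrow> ('a \<Rightarrow> 'a \<Rightarrow>\<^sub>L 'b)
     \<Rightarrow> ('a \<Rightarrow> 'a \<Rightarrow>\<^sub>L ('a \<Rightarrow>\<^sub>L 'b)) \<Rightarrow> 'a set \<Rightarrow> bool" where
  "C2_on f f' f'' S \<longleftrightarrow> C1_on f f' S \<and> C1_on f' f'' S"

definition tdir :: "('n::finite) stp" where "tdir = (1, 0)"
definition xdir :: "('n::finite) \<Rightarrow> 'n stp" where "xdir j = (0, axis j 1)"

definition grad_vel :: "('n stp \<Rightarrow>\<^sub>L (real^'n)) \<Rightarrow> real^'n^'n" where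
  "grad_vel L = (\<chi> i j. (blinfun_apply L (xdir j)) $ i)"

definition lap_vel :: "('n stp \<Rightarrow>\<^sub>L ('n stp \<Rightarrow>\<^sub>L (real^'n))) \<Rightarrow> real^'n" where
  "lap_vel L2 = (\<Sum>j\<in>UNIV. blinfun_apply (blinfun_apply L2 (xdir j)) (xdir j))"

definition grad_scal :: "('n stp \<Rightarrow>\<^sub>L real) \<Rightarrow> real^'n" where
  "grad_scal L = (\<chi> j. blinfun_apply L (xdir j))"

definition div_mat :: "('n stp \<Rightarrow>\<^sub>L (real^'n^'n)) \<Rightarrow> real^'n" where
  "div_mat L = (\<chi> i. \<Sum>j\<in>UNIV. (blinfun_apply L (xdir j)) $ i $ j)"

definition conv :: "real^'n \<Rightarrow> ('n stp \<Rightarrow>\<^sub>L 'b::real_normed_vector) \<Rightarrow> 'b" where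
  "conv v L = (\<Sum>j\<in>UNIV. (v $ j) *\<^sub>R blinfun_apply L (xdir j))"

definition spd :: "real^'n^'n \<Rightarrow> bool" where
  "spd M \<longleftrightarrow> transpose M = M \<and> (\<forall>v. v \<noteq> 0 \<longrightarrow> v \<bullet> (M *v v) > 0)"

definition bounded_domain :: "(real^'n) set \<Rightarrow> bool" where
  "bounded_domain D \<longleftrightarrow> D \<noteq> {} \<and> open D \<and> connected D \<and> bounded D"

definition conformation :: "real \<Rightarrow> real \<Rightarrow> real^'n^'n \<Rightarrow> real^'n^'n" where
  "conformation We \<epsilon> \<tau> = (We / \<epsilon>) *\<^sub>R \<tau> + mat 1"

end

theory Submission
  imports Defs
begin

definition ddet :: "real^'n^'n \<Rightarrow> real^'n^'n \<Rightarrow> real" where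
  "ddet X H = (\<Sum>p\<in>{p. p permutes (UNIV::'n set)}. of_int (sign p) *
      (\<Sum>i\<in>UNIV. H$i$p i * (\<Prod>j\<in>UNIV - {i}. X$j$p j)))"

lemma bl_entry: "bounded_linear (\<lambda>x::real^'n::finite^'m::finite. x$i$j)"
  by (rule bounded_linear_compose[OF bounded_linear_vec_nth bounded_linear_vec_nth])

lemma det_has_derivative: fixes X :: "real^'n::finite^'n" shows "(det has_derivative ddet X) (at X within S)"
proof -
  have "((\<lambda>Y. \<Sum>p\<in>{p. p permutes (UNIV::'n set)}. of_int (sign p) * (\<Prod>i\<in>UNIV. Y$i$p i))
     has_derivative (\<lambda>H. \<Sum>p\<in>{p. p permutes (UNIV::'n set)}. of_int (sign p) *
      (\<Sum>i\<in>UNIV. H$i$p i * (\<Prod>j\<in>UNIV - {i}. X$j$p j)))) (at X within S)"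
    apply (rule has_derivative_sum)
    apply (rule has_derivative_mult_right)
    apply (rule has_derivative_prod)
    apply (rule bounded_linear_imp_has_derivative)
    apply (rule bl_entry)
    done
  then show ?thesis by (simp add: det_def[abs_def] ddet_def[abs_def])
qed

lemma mat_add_rdistrib: "((A::real^'n::finite^'m::finite) + B) ** C = A ** C + B ** C"
  by (simp add: matrix_matrix_mult_def vec_eq_iff distrib_right sum.distrib)

lemma ddet_I: "ddet (mat 1 :: real^'n::finite^'n) L = trace L"
proof -
  let ?P = "{p. p permutes (UNIV::'n set)}"
  let ?f = "\<lambda>p. of_int (sign p) * (\<Sum>i\<in>UNIV. L$i$p i * (\<Prod>j\<in>UNIV - {i}. (mat 1 :: real^'n^'n)$j$p j))"
  have z: "?f p = 0" if p: "p \<in> ?P - {id}" for p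
  proof -
    have "\<And>i. (\<Prod>j\<in>UNIV - {i}. (mat 1 :: real^'n^'n)$j$p j) = 0"
    proof -
      fix i
      from p obtain k where k: "p k \<noteq> k" by (auto simp: fun_eq_iff)
      have pinj: "inj p" using p permutes_inj by auto
      have "\<exists>j. j \<noteq> i \<and> p j \<noteq> j"
      proof (cases "k = i")
        case True
        have "p (p i) \<noteq> p i" using k True pinj by (metis injD)
        moreover have "p i \<noteq> i" using k True by simp
        ultimately show ?thesis by metis
      next
        case False then show ?thesis using k by blast
      qed
      then obtain j where "j \<noteq> i" "p j \<noteq> j" by blast
      then show "(\<Prod>j\<in>UNIV - {i}. (mat 1 :: real^'n^'n)$j$p j) = 0"
        by (intro prod_zero) (auto simp: mat_def intro!: bexI[of _ j])
    qed
    then show ?thesis by (simp only: mult_zero_right sum.neutral_const)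
  qed
  have "ddet (mat 1 :: real^'n::finite^'n) L = sum ?f ?P" by (simp add: ddet_def)
  also have "\<dots> = ?f id + sum ?f (?P - {id})"
    by (rule sum.remove) (auto simp: permutes_id finite_permutations)
  also have "sum ?f (?P - {id}) = 0"
    by (rule sum.neutral) (use z in blast)
  also have "?f id + 0 = trace L"
    by (simp add: trace_def mat_def sign_id)
  finally show ?thesis .
qed

lemma ddet_linear: "linear (ddet (X::real^'n::finite^'n))"
  using det_has_derivative[of X UNIV] has_derivative_linear by blast

lemma ddet_scale: "ddet (X::real^'n::finite^'n) (c *\<^sub>R H) = c * ddet X H"
  using linear_scale[OF ddet_linear] by simp

lemma ddet_deriv_line:
  fixes X M :: "real^'n::finite^'n"
  shows "((\<lambda>s::real. det (X + s *\<^sub>R M)) has_derivative (\<lambda>s. ddet X (s *\<^sub>R M))) (at 0)"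
proof -
  have "((\<lambda>s::real. X + s *\<^sub>R M) has_derivative (\<lambda>s. s *\<^sub>R M)) (at 0)"
    by (intro derivative_eq_intros) auto
  from has_derivative_compose[OF this det_has_derivative[of "X + 0 *\<^sub>R M" UNIV]]
  show ?thesis by simp
qed

lemma ddet_right_mult:
  fixes X L :: "real^'n::finite^'n"
  shows "ddet X (X ** L) = det X * trace L"
proof -
  have e: "(\<lambda>s::real. det (X + s *\<^sub>R (X ** L))) = (\<lambda>s. det X * det (mat 1 + s *\<^sub>R L))"
    by (rule ext) (simp add: det_mul[symmetric] matrix_add_ldistrib matrix_scalar_ac scalar_matrix_assoc[symmetric])
  have d1: "((\<lambda>s::real. det X * det (mat 1 + s *\<^sub>R L)) has_derivative (\<lambda>s. det X * ddet (mat 1) (s *\<^sub>R L))) (at 0)"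
    by (intro has_derivative_mult_right ddet_deriv_line)
  have "(\<lambda>s. ddet X (s *\<^sub>R (X ** L))) = (\<lambda>s. det X * ddet (mat 1) (s *\<^sub>R L))"
    using has_derivative_unique[OF ddet_deriv_line[of X "X ** L"], unfolded e, OF d1] .
  then have "ddet X (1 *\<^sub>R (X ** L)) = det X * ddet (mat 1) (1 *\<^sub>R L)" by metis
  then show ?thesis by (simp add: ddet_I)
qed

lemma ddet_left_mult:
  fixes X L :: "real^'n::finite^'n"
  shows "ddet X (L ** X) = det X * trace L"
proof -
  have e: "(\<lambda>s::real. det (X + s *\<^sub>R (L ** X))) = (\<lambda>s. det X * det (mat 1 + s *\<^sub>R L))"
  proof (rule ext)
    fix s :: real
    have "X + s *\<^sub>R (L ** X) = (mat 1 + s *\<^sub>R L) ** X"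
      by (simp add: mat_add_rdistrib scalar_matrix_assoc)
    then show "det (X + s *\<^sub>R (L ** X)) = det X * det (mat 1 + s *\<^sub>R L)"
      by (simp add: det_mul mult.commute)
  qed
  have d1: "((\<lambda>s::real. det X * det (mat 1 + s *\<^sub>R L)) has_derivative (\<lambda>s. det X * ddet (mat 1) (s *\<^sub>R L))) (at 0)"
    by (intro has_derivative_mult_right ddet_deriv_line)
  have "(\<lambda>s. ddet X (s *\<^sub>R (L ** X))) = (\<lambda>s. det X * ddet (mat 1) (s *\<^sub>R L))"
    using has_derivative_unique[OF ddet_deriv_line[of X "L ** X"], unfolded e, OF d1] .
  then have "ddet X (1 *\<^sub>R (L ** X)) = det X * ddet (mat 1) (1 *\<^sub>R L)" by metis
  then show ?thesis by (simp add: ddet_I)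
qed

lemma sym_inner:
  fixes B :: "real^'n::finite^'n"
  assumes "transpose B = B"
  shows "x \<bullet> (B *v y) = (B *v x) \<bullet> y"
proof -
  have "x \<bullet> (B *v y) = (x v* B) \<bullet> y" by (simp add: dot_lmul_matrix)
  also have "x v* B = transpose B *v x" by simp
  finally show ?thesis using assms by simp
qed

lemma eig_step:
  fixes B :: "real^'n::finite^'n"
  assumes sym: "transpose B = B" and fin: "finite S" and card: "card S < CARD('n)"
    and eig: "\<And>s. s \<in> S \<Longrightarrow> \<exists>l. B *v s = l *\<^sub>R s"
  shows "\<exists>v. norm v = 1 \<and> (\<forall>s\<in>S. v \<bullet> s = 0) \<and> (\<exists>l. B *v v = l *\<^sub>R v)"
proof -
  have "dim S \<le> card S" by (rule dim_le_card'[OF fin])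
  then have "dim S < DIM(real^'n)" using card by simp
  then obtain x :: "real^'n" where x: "x \<noteq> 0" "\<And>y. y \<in> span S \<Longrightarrow> orthogonal x y"
    using orthogonal_to_subspace_exists[OF \<open>dim S < DIM(real^'n)\<close>] by metis
  define V where "V = {v::real^'n. \<forall>s\<in>S. v \<bullet> s = 0}"
  define T where "T = sphere (0::real^'n) 1 \<inter> (\<Inter>s\<in>S. {v. s \<bullet> v = 0})"
  have TV: "T = {v\<in>V. norm v = 1}" by (auto simp: T_def V_def inner_commute)
  have "compact T" unfolding T_def
    by (intro compact_Int_closed compact_sphere closed_INT ballI closed_hyperplane)
  moreover have "x /\<^sub>R norm x \<in> T"
  proof -
    have "\<forall>s\<in>S. (x /\<^sub>R norm x) \<bullet> s = 0"
      using x(2)[OF span_base] by (simp add: orthogonal_def)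
    moreover have "norm (x /\<^sub>R norm x) = 1" using x(1) by simp
    ultimately show ?thesis by (simp add: TV V_def)
  qed
  then have "T \<noteq> {}" by blast
  moreover have "continuous_on T (\<lambda>v. v \<bullet> (B *v v))"
    by (rule continuous_on_inner[OF continuous_on_id matrix_vector_mult_linear_continuous_on])
  ultimately obtain v where vT: "v \<in> T" and vmax: "\<And>y. y \<in> T \<Longrightarrow> y \<bullet> (B *v y) \<le> v \<bullet> (B *v v)"
    using continuous_attains_sup[of T "\<lambda>v. v \<bullet> (B *v v)"] by auto
  define q where "q = v \<bullet> (B *v v)"
  have vV: "v \<in> V" and nv: "norm v = 1" using vT TV by auto
  have vv: "v \<bullet> v = 1" using nv by (simp add: dot_square_norm)
  have Vsub: "a *\<^sub>R y + b *\<^sub>R z \<in> V" if "y \<in> V" "z \<in> V" for a b y z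
    using that by (auto simp: V_def inner_add_left)
  have qle: "z \<bullet> (B *v z) \<le> q * (z \<bullet> z)" if "z \<in> V" for z
  proof (cases "z = 0")
    case True then show ?thesis by simp
  next
    case False
    have "z /\<^sub>R norm z \<in> T" using that False by (auto simp: TV V_def)
    then have "(z /\<^sub>R norm z) \<bullet> (B *v (z /\<^sub>R norm z)) \<le> q" using vmax q_def by blast
    then have "(z \<bullet> (B *v z)) / (norm z)^2 \<le> q"
      by (simp add: matrix_vector_mult_scaleR power2_eq_square divide_inverse mult_ac)
    then show ?thesis using False by (simp add: dot_square_norm pos_divide_le_eq)
  qed
  have BvV: "B *v v \<in> V"
  proof -
    have "(B *v v) \<bullet> s = 0" if sS: "s \<in> S" for s
    proof -
      obtain l where l: "B *v s = l *\<^sub>R s" using eig[OF sS] by blast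
      have "(B *v v) \<bullet> s = v \<bullet> (B *v s)" using sym_inner[OF sym] by simp
      also have "\<dots> = 0" using vV sS l by (simp add: V_def)
      finally show ?thesis .
    qed
    then show ?thesis by (simp add: V_def)
  qed
  define w where "w = B *v v - q *\<^sub>R v"
  have wV: "w \<in> V" unfolding w_def using Vsub[OF BvV vV, of 1 "-q"] by simp
  have wv: "w \<bullet> v = 0"
  proof -
    have "w \<bullet> v = (B *v v) \<bullet> v - q * (v \<bullet> v)" by (simp add: w_def inner_diff_left)
    also have "(B *v v) \<bullet> v = q" by (simp add: q_def inner_commute)
    finally show ?thesis using vv by simp
  qed
  have wBv: "w \<bullet> (B *v v) = w \<bullet> w"
  proof -
    have "B *v v = w + q *\<^sub>R v" by (simp add: w_def)
    then show ?thesis by (simp add: inner_add_right wv)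
  qed
  define c where "c = w \<bullet> w"
  define K where "K = q * c - w \<bullet> (B *v w)"
  have ineq: "2 * t * c \<le> t^2 * K" for t :: real
  proof -
    have zV: "v + t *\<^sub>R w \<in> V" using Vsub[OF vV wV, of 1 t] by simp
    have "(v + t *\<^sub>R w) \<bullet> (B *v (v + t *\<^sub>R w)) = q + 2 * t * (w \<bullet> (B *v v)) + t^2 * (w \<bullet> (B *v w))"
    proof -
      have e1: "v \<bullet> (B *v w) = w \<bullet> (B *v v)"
        using sym_inner[OF sym, of v w] by (simp add: inner_commute)
      show ?thesis
        by (simp add: q_def e1 matrix_vector_right_distrib matrix_vector_mult_scaleR inner_add_left
            inner_add_right power2_eq_square algebra_simps)
    qed
    moreover have "(v + t *\<^sub>R w) \<bullet> (v + t *\<^sub>R w) = 1 + t^2 * c"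
    proof -
      have "v \<bullet> w = 0" using wv by (simp add: inner_commute)
      then show ?thesis using vv wv
        by (simp add: c_def inner_add_left inner_add_right power2_eq_square algebra_simps)
    qed
    ultimately have h: "q + 2 * t * c + t^2 * (w \<bullet> (B *v w)) \<le> q * (1 + t^2 * c)"
      using qle[OF zV] wBv by (simp add: c_def)
    then show ?thesis by (simp add: K_def algebra_simps)
  qed
  have c0: "c \<ge> 0" by (simp add: c_def)
  have "c = 0"
  proof (rule ccontr)
    assume "c \<noteq> 0"
    then have cpos: "c > 0" using c0 by simp
    define t where "t = c / (\<bar>K\<bar> + 1)"
    have tpos: "t > 0" using cpos by (simp add: t_def)
    have "2 * t * c \<le> t^2 * K" by (rule ineq)
    also have "\<dots> \<le> t^2 * \<bar>K\<bar>" by (intro mult_left_mono) auto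
    also have "\<dots> = t * (c * \<bar>K\<bar> / (\<bar>K\<bar> + 1))" by (simp add: t_def power2_eq_square)
    also have "\<dots> < t * c"
      using tpos cpos by (intro mult_strict_left_mono) (auto simp: field_simps)
    finally show False using tpos cpos by (simp add: mult_pos_pos)
  qed
  then have "w = 0" by (simp add: c_def)
  then have "B *v v = q *\<^sub>R v" by (simp add: w_def)
  then show ?thesis using nv vV by (auto simp: V_def)
qed

lemma eig_basis:
  fixes B :: "real^'n::finite^'n"
  assumes sym: "transpose B = B"
  shows "\<exists>S. finite S \<and> card S = CARD('n) \<and> (\<forall>s\<in>S. norm s = 1 \<and> (\<exists>l. B *v s = l *\<^sub>R s))
          \<and> (\<forall>s\<in>S. \<forall>s'\<in>S. s \<noteq> s' \<longrightarrow> s \<bullet> s' = 0)"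
proof -
  have "k \<le> CARD('n) \<Longrightarrow> \<exists>S. finite S \<and> card S = k \<and> (\<forall>s\<in>S. norm s = 1 \<and> (\<exists>l. B *v s = l *\<^sub>R s))
          \<and> (\<forall>s\<in>S. \<forall>s'\<in>S. s \<noteq> s' \<longrightarrow> s \<bullet> s' = 0)" for k
  proof (induction k)
    case 0
    show ?case by (intro exI[of _ "{}"]) auto
  next
    case (Suc k)
    then obtain S where S: "finite S" "card S = k" "\<forall>s\<in>S. norm s = 1 \<and> (\<exists>l. B *v s = l *\<^sub>R s)"
        "\<forall>s\<in>S. \<forall>s'\<in>S. s \<noteq> s' \<longrightarrow> s \<bullet> s' = 0" by auto
    have "card S < CARD('n)" using Suc.prems S(2) by simp
    then obtain v where v: "norm v = 1" "\<forall>s\<in>S. v \<bullet> s = 0" "\<exists>l. B *v v = l *\<^sub>R v"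
      using eig_step[OF sym S(1)] S(3) by blast
    have vS: "v \<notin> S"
    proof
      assume "v \<in> S"
      then have "v \<bullet> v = 0" using v(2) by blast
      then show False using v(1) by simp
    qed
    show ?case
    proof (intro exI[of _ "insert v S"] conjI)
      show "finite (insert v S)" using S(1) by simp
      show "card (insert v S) = Suc k" using S(1,2) vS by simp
      show "\<forall>s\<in>insert v S. norm s = 1 \<and> (\<exists>l. B *v s = l *\<^sub>R s)" using S(3) v by auto
      show "\<forall>s\<in>insert v S. \<forall>s'\<in>insert v S. s \<noteq> s' \<longrightarrow> s \<bullet> s' = 0"
        using S(4) v(2) by (auto simp: inner_commute)
    qed
  qed
  then show ?thesis by blast
qed

lemma spd_amgm:
  fixes B :: "real^'n::finite^'n"
  assumes "spd B"
  shows "det B > 0 \<and> trace B \<ge> real CARD('n) * det B powr (1 / real CARD('n))"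
proof -
  have sym: "transpose B = B" and pos: "\<And>v. v \<noteq> 0 \<Longrightarrow> v \<bullet> (B *v v) > 0"
    using assms by (auto simp: spd_def)
  obtain S where S: "finite S" "card S = CARD('n)" "\<forall>s\<in>S. norm s = 1 \<and> (\<exists>l. B *v s = l *\<^sub>R s)"
        "\<forall>s\<in>S. \<forall>s'\<in>S. s \<noteq> s' \<longrightarrow> s \<bullet> s' = 0"
    using eig_basis[OF sym] by blast
  obtain f where f: "bij_betw f (UNIV::'n set) S"
    using finite_same_card_bij[of "UNIV::'n set" S] S(1,2) by auto
  have fS: "f j \<in> S" for j using f by (auto simp: bij_betw_def)
  have finj: "f i = f j \<Longrightarrow> i = j" for i j using f by (auto simp: bij_betw_def inj_def)
  have orth: "f i \<bullet> f j = (if i = j then 1 else 0)" for i j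
  proof (cases "i = j")
    case True
    then show ?thesis using S(3) fS[of j] by (simp add: dot_square_norm)
  next
    case False
    then show ?thesis using S(4) fS[of i] fS[of j] finj by auto
  qed
  have eigf: "\<exists>l. B *v f j = l *\<^sub>R f j" for j using S(3) fS by blast
  define Q :: "real^'n^'n" where "Q = (\<chi> i j. f j $ i)"
  have Qent: "(transpose Q ** M ** Q) $ i $ j = f i \<bullet> (M *v f j)" for M i j
    apply (simp add: Q_def matrix_matrix_mult_def transpose_def matrix_vector_mult_def inner_vec_def
        sum_distrib_left sum_distrib_right mult.assoc)
    apply (subst sum.swap)
    apply (simp add: mult_ac)
    done
  have QQ: "transpose Q ** Q = mat 1"
  proof -
    have "(transpose Q ** Q) $ i $ j = f i \<bullet> f j" for i j
      using Qent[of "mat 1" i j] by simp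
    then show ?thesis using orth by (simp add: vec_eq_iff mat_def)
  qed
  then have QQ': "Q ** transpose Q = mat 1" using matrix_left_right_inverse by blast
  define \<Lambda> where "\<Lambda> = transpose Q ** B ** Q"
  define lam where "lam j = \<Lambda> $ j $ j" for j
  have lampos: "lam j > 0" for j
  proof -
    have "f j \<noteq> 0" using S(3) fS[of j] by auto
    then show ?thesis using pos by (simp add: lam_def \<Lambda>_def Qent)
  qed
  have diag: "\<Lambda> $ i $ j = 0" if "i \<noteq> j" for i j
  proof -
    obtain l where "B *v f j = l *\<^sub>R f j" using eigf by blast
    then show ?thesis using orth[of i j] that by (simp add: \<Lambda>_def Qent)
  qed
  have detL: "det \<Lambda> = det B"
  proof -
    have h1: "det Q * det Q = 1" using QQ by (metis det_I det_mul det_transpose)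
    have "det \<Lambda> = det (transpose Q ** B) * det Q" unfolding \<Lambda>_def by (rule det_mul)
    also have "\<dots> = det Q * det B * det Q" by (simp only: det_mul det_transpose)
    also have "\<dots> = det B * (det Q * det Q)" by (simp only: mult_ac)
    finally show ?thesis using h1 by simp
  qed
  have trL: "trace \<Lambda> = trace B"
  proof -
    have "trace \<Lambda> = trace (Q ** (transpose Q ** B))" unfolding \<Lambda>_def by (rule trace_mul_sym)
    also have "Q ** (transpose Q ** B) = (Q ** transpose Q) ** B" by (rule matrix_mul_assoc)
    also have "\<dots> = B" by (simp only: QQ' matrix_mul_lid)
    finally show ?thesis .
  qed
  have detprod: "det B = (\<Prod>j\<in>UNIV. lam j)"
    using det_diagonal[of \<Lambda>] diag detL by (simp add: lam_def)
  have trsum: "trace B = (\<Sum>j\<in>UNIV. lam j)"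
    using trL by (simp add: trace_def lam_def)
  have "det B > 0" unfolding detprod by (rule prod_pos) (use lampos in auto)
  moreover have "(\<Sum>j\<in>UNIV. lam j / card (UNIV::'n set)) \<ge> (\<Prod>j\<in>UNIV. lam j) powr (1 / card (UNIV::'n set))"
    by (rule arith_geom_mean) (use lampos less_imp_le in auto)
  then have "trace B / real CARD('n) \<ge> det B powr (1 / real CARD('n))"
    by (simp add: detprod trsum sum_divide_distrib)
  then have "trace B \<ge> real CARD('n) * det B powr (1 / real CARD('n))"
    by (simp add: field_simps)
  ultimately show ?thesis by blast
qed

lemma trace_transpose': "trace (transpose M) = trace (M::real^'n::finite^'n)"
  by (simp add: trace_def transpose_def)

lemma spd_inv:
  fixes A :: "real^'n::finite^'n"
  assumes "spd A"
  obtains A' where "A ** A' = mat 1" "A' ** A = mat 1" "spd A'" "det A * det A' = 1"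
proof -
  have dpos: "det A > 0" using spd_amgm[OF assms] by blast
  then have "invertible A" by (simp add: invertible_det_nz)
  then obtain A' where AA: "A ** A' = mat 1" "A' ** A = mat 1" unfolding invertible_def by blast
  have symA: "transpose A = A" and pos: "\<And>v. v \<noteq> 0 \<Longrightarrow> v \<bullet> (A *v v) > 0"
    using assms by (auto simp: spd_def)
  have "transpose A' ** A = mat 1"
    using arg_cong[OF AA(1), of transpose] symA by (simp add: matrix_transpose_mul)
  then have "transpose A' = transpose A' ** (A ** A')" using AA(1) by simp
  also have "\<dots> = A'" by (simp add: matrix_mul_assoc \<open>transpose A' ** A = mat 1\<close>)
  finally have symA': "transpose A' = A'" .
  have "v \<bullet> (A' *v v) > 0" if "v \<noteq> 0" for v
  proof -
    define w where "w = A' *v v"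
    have vw: "v = A *v w" by (simp add: w_def matrix_vector_mul_assoc AA(1))
    have "w \<noteq> 0" using that vw by auto
    then have "w \<bullet> (A *v w) > 0" by (rule pos)
    then have "w \<bullet> v > 0" using vw by simp
    then show ?thesis by (simp add: w_def inner_commute)
  qed
  then have "spd A'" using symA' by (simp add: spd_def)
  moreover have "det A * det A' = 1" using AA(1) by (metis det_I det_mul)
  ultimately show ?thesis using that AA by blast
qed

lemma rate_bound:
  fixes A Lg :: "real^'n::finite^'n"
  assumes "spd A" "trace Lg = 0" "We > 0"
  shows "ddet A (Lg ** A + A ** transpose Lg - (1/We) *\<^sub>R A + (1/We) *\<^sub>R mat 1)
          \<ge> - (real CARD('n) / We) * max 0 (det A - 1)"
proof -
  obtain A' where AA: "A ** A' = mat 1" "spd A'" "det A * det A' = 1"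
    using spd_inv[OF assms(1)] by metis
  define P where "P = det A"
  define d where "d = real CARD('n)"
  have P: "P > 0" using spd_amgm[OF assms(1)] by (simp add: P_def)
  have dA': "det A' = 1 / P" using AA(3) P by (simp add: P_def field_simps)
  define T where "T = trace A'"
  have T: "T \<ge> d * (1/P) powr (1/d)" using spd_amgm[OF AA(2)] by (simp add: T_def d_def dA')
  have lin: "linear (ddet A)" by (rule ddet_linear)
  have e1: "ddet A (Lg ** A) = 0" using ddet_left_mult[of A Lg] assms(2) by simp
  have e2: "ddet A (A ** transpose Lg) = 0" using ddet_right_mult[of A "transpose Lg"] assms(2) by (simp add: trace_transpose')
  have e3: "ddet A A = P * d"
    using ddet_right_mult[of A "mat 1"] by (simp add: P_def d_def trace_I)
  have e4: "ddet A (mat 1) = P * T"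
    using ddet_right_mult[of A A'] AA(1) by (simp add: P_def T_def)
  have "ddet A (Lg ** A + A ** transpose Lg - (1/We) *\<^sub>R A + (1/We) *\<^sub>R mat 1)
      = ddet A (Lg ** A) + ddet A (A ** transpose Lg) - (1/We) * ddet A A + (1/We) * ddet A (mat 1)"
    by (simp add: linear_add[OF lin] linear_diff[OF lin] ddet_scale)
  also have "\<dots> = (P * T - P * d) / We" using e1 e2 e3 e4 by (simp add: diff_divide_distrib)
  finally have eq: "ddet A (Lg ** A + A ** transpose Lg - (1/We) *\<^sub>R A + (1/We) *\<^sub>R mat 1) = (P * T - P * d) / We" .
  have d1: "d \<ge> 1" by (simp add: d_def)
  have key: "P * T \<ge> d * min 1 P"
  proof (cases "P \<le> 1")
    case True
    have "(1/P) powr (1/d) \<ge> 1" using True P d1 by (intro ge_one_powr_ge_zero) auto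
    then have "d * 1 \<le> d * (1/P) powr (1/d)" using d1 by (intro mult_left_mono) auto
    then have "T \<ge> d" using T by simp
    then show ?thesis using True P by (simp add: min_def mult_left_mono mult.commute)
  next
    case False
    have "P powr (1/d) \<le> P powr 1" using False d1 by (intro powr_mono) auto
    then have pp: "P powr (1/d) \<le> P" using P by simp
    have q: "(1/P) powr (1/d) = 1 / P powr (1/d)" using P by (simp add: powr_divide)
    have ge1: "P / P powr (1/d) \<ge> 1" using pp P by simp
    have "d * 1 \<le> d * (P / P powr (1/d))" using ge1 d1 by (intro mult_left_mono) auto
    also have "\<dots> = P * (d * (1/P) powr (1/d))" using q by simp
    also have "\<dots> \<le> P * T" using T P by (intro mult_left_mono) auto
    finally show ?thesis using False by (simp add: min_def)
  qed
  have "(P * T - P * d) / We \<ge> (d * min 1 P - P * d) / We"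
    using key assms(3) by (intro divide_right_mono) auto
  moreover have "(d * min 1 P - P * d) / We = - (d / We) * max 0 (P - 1)"
    using assms(3) by (simp add: min_def max_def field_simps)
  ultimately show ?thesis using eq by (simp add: P_def d_def)
qed

lemma ddet_cont:
  fixes f g :: "'a::topological_space \<Rightarrow> real^'n::finite^'n"
  assumes "continuous_on T f" "continuous_on T g"
  shows "continuous_on T (\<lambda>z. ddet (f z) (g z))"
  unfolding ddet_def
  by (intro continuous_on_sum continuous_on_mult continuous_on_const continuous_on_prod
      continuous_on_component assms)

lemma Phi_cont:
  fixes \<tau> :: "'n::finite stp \<Rightarrow> real^'n^'n"
    and D\<tau> :: "'n stp \<Rightarrow> ('n stp \<Rightarrow>\<^sub>L (real^'n^'n))"
  assumes "continuous_on S \<tau>" "continuous_on S D\<tau>"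
  shows "continuous_on (S \<times> (UNIV::(real^'n) set))
     (\<lambda>p. ddet (K *\<^sub>R \<tau> (fst p) + mat 1) (K *\<^sub>R blinfun_apply (D\<tau> (fst p)) (1, snd p)))"
proof -
  have fS: "fst ` (S \<times> (UNIV::(real^'n) set)) \<subseteq> S" by auto
  have c1: "continuous_on (S \<times> (UNIV::(real^'n) set)) (\<lambda>p. \<tau> (fst p))"
    by (rule continuous_on_compose2[OF assms(1) continuous_on_fst[OF continuous_on_id] fS])
  have c2: "continuous_on (S \<times> (UNIV::(real^'n) set)) (\<lambda>p. D\<tau> (fst p))"
    by (rule continuous_on_compose2[OF assms(2) continuous_on_fst[OF continuous_on_id] fS])
  have c3: "continuous_on (S \<times> (UNIV::(real^'n) set)) (\<lambda>p::'n stp \<times> (real^'n). (1::real, snd p))"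
    by (intro continuous_on_Pair continuous_on_const continuous_on_snd continuous_on_id)
  have c4: "continuous_on (S \<times> (UNIV::(real^'n) set)) (\<lambda>p. blinfun_apply (D\<tau> (fst p)) (1, snd p))"
    by (rule blinfun.continuous_on[OF c2 c3])
  show ?thesis
    by (intro ddet_cont continuous_on_add continuous_on_scaleR continuous_on_const c1 c4)
qed

lemma mvt_F:
  fixes \<tau> :: "'a::real_normed_vector \<Rightarrow> real^'n::finite^'n"
  assumes der: "\<And>z. z \<in> S \<Longrightarrow> (\<tau> has_derivative blinfun_apply (D\<tau> z)) (at z within S)"
    and seg: "\<And>s. s \<in> {0..1} \<Longrightarrow> a + s *\<^sub>R v \<in> S"
  shows "\<exists>s\<in>{0..1}. det (K *\<^sub>R \<tau> (a + v) + mat 1) - det (K *\<^sub>R \<tau> a + mat 1)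
          = ddet (K *\<^sub>R \<tau> (a + s *\<^sub>R v) + mat 1) (K *\<^sub>R blinfun_apply (D\<tau> (a + s *\<^sub>R v)) v)"
proof -
  define g where "g s = det (K *\<^sub>R \<tau> (a + s *\<^sub>R v) + mat 1)" for s :: real
  define g' where "g' s r = ddet (K *\<^sub>R \<tau> (a + s *\<^sub>R v) + mat 1) (K *\<^sub>R blinfun_apply (D\<tau> (a + s *\<^sub>R v)) (r *\<^sub>R v))" for s r :: real
  have gder: "(g has_derivative (\<lambda>r. ddet (K *\<^sub>R \<tau> (a + s *\<^sub>R v) + mat 1) (K *\<^sub>R blinfun_apply (D\<tau> (a + s *\<^sub>R v)) (r *\<^sub>R v))))
      (at s within {0..1})" if s: "0 \<le> s" "s \<le> 1" for s
  proof -
    have g1: "((\<lambda>s. a + s *\<^sub>R v) has_derivative (\<lambda>r. r *\<^sub>R v)) (at s within {0..1})"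
        by (intro derivative_eq_intros) auto
    have img: "(\<lambda>s. a + s *\<^sub>R v) ` {0..1} \<subseteq> S" using seg by auto
    have "(\<tau> has_derivative blinfun_apply (D\<tau> (a + s *\<^sub>R v))) (at (a + s *\<^sub>R v) within ((\<lambda>s. a + s *\<^sub>R v) ` {0..1}))"
      by (rule has_derivative_subset[OF der img]) (use seg s in auto)
    from has_derivative_in_compose[OF g1 this]
    have g2: "((\<lambda>s. \<tau> (a + s *\<^sub>R v)) has_derivative (\<lambda>r. blinfun_apply (D\<tau> (a + s *\<^sub>R v)) (r *\<^sub>R v))) (at s within {0..1})" .
    have g3: "((\<lambda>s. K *\<^sub>R \<tau> (a + s *\<^sub>R v) + mat 1) has_derivative (\<lambda>r. K *\<^sub>R blinfun_apply (D\<tau> (a + s *\<^sub>R v)) (r *\<^sub>R v))) (at s within {0..1})"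
      using has_derivative_add_const[OF has_derivative_scaleR_right[OF g2, of K], of "mat 1"] by simp
    show ?thesis unfolding g_def
      by (rule has_derivative_compose[OF g3 det_has_derivative])
  qed
  then obtain s where s: "s \<in> {0..1}" and eq: "g 1 - g 0 = ddet (K *\<^sub>R \<tau> (a + s *\<^sub>R v) + mat 1) (K *\<^sub>R blinfun_apply (D\<tau> (a + s *\<^sub>R v)) ((1 - 0) *\<^sub>R v))"
    using mvt_very_simple[of 0 1 g g'] gder unfolding g'_def by auto
  then show ?thesis by (intro bexI[OF _ s]) (simp add: g_def)
qed

lemma sum_axis_vec: "(\<Sum>j\<in>UNIV. (v::real^'n::finite) $ j *\<^sub>R axis j (1::real)) = v"
  by (simp add: vec_eq_iff axis_def if_distrib cong: if_cong)

lemma conv_eq: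
  fixes L :: "'n::finite stp \<Rightarrow>\<^sub>L 'b::real_normed_vector"
  shows "blinfun_apply L tdir + conv v L = blinfun_apply L (1, v)"
proof -
  have "conv v L = blinfun_apply L (\<Sum>j\<in>UNIV. v $ j *\<^sub>R xdir j)"
    by (simp add: conv_def blinfun.sum_right blinfun.scaleR_right)
  also have "(\<Sum>j\<in>UNIV. v $ j *\<^sub>R xdir j) = ((0::real), v)"
    by (simp add: xdir_def sum_prod sum_axis_vec prod_eq_iff fst_sum snd_sum)
  finally show ?thesis by (simp add: tdir_def blinfun.add_right[symmetric])
qed

lemma const_rewrite:
  fixes G \<tau> X :: "real^'n::finite^'n"
  assumes X: "X = G ** \<tau> + \<tau> ** transpose G - (1 / We) *\<^sub>R \<tau> + (\<epsilon> / We) *\<^sub>R (G + transpose G)"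
    and We: "We > 0" and eps: "\<epsilon> > 0"
  shows "(We / \<epsilon>) *\<^sub>R X = G ** ((We / \<epsilon>) *\<^sub>R \<tau> + mat 1) + ((We / \<epsilon>) *\<^sub>R \<tau> + mat 1) ** transpose G
     - (1 / We) *\<^sub>R ((We / \<epsilon>) *\<^sub>R \<tau> + mat 1) + (1 / We) *\<^sub>R mat 1"
proof -
  have k: "(We / \<epsilon>) * (\<epsilon> / We) = 1" using We eps by simp
  show ?thesis
    unfolding X using We eps
    by (simp add: matrix_add_ldistrib mat_add_rdistrib matrix_scalar_ac scalar_matrix_assoc[symmetric]
        scaleR_add_right scaleR_diff_right k algebra_simps)
qed

lemma trace_scaleR: "trace (c *\<^sub>R (M::real^'n::finite^'n)) = c * trace M"
  by (simp add: trace_def sum_distrib_left)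

lemma ubound:
  fixes u :: "'n::finite stp \<Rightarrow> real^'n" and Du :: "'n stp \<Rightarrow> ('n stp \<Rightarrow>\<^sub>L (real^'n))"
    and D :: "(real^'n) set"
  assumes oD: "open D" and bD: "bounded D"
    and der: "\<And>z. z \<in> {0..} \<times> closure D \<Longrightarrow> (u has_derivative blinfun_apply (Du z)) (at z within ({0..} \<times> closure D))"
    and noslip: "\<And>x. x \<in> frontier D \<Longrightarrow> u (t, x) = 0"
    and bnd: "\<And>x. x \<in> closure D \<Longrightarrow> norm (Du (t, x)) \<le> L"
    and t: "t \<ge> 0" and x: "x \<in> D"
  shows "norm (u (t, x)) \<le> L * infdist x (- D)"
proof -
  have cl: "closed (- D)" using oD by (simp add: closed_Compl)
  have ne: "- D \<noteq> {}"
  proof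
    assume "- D = {}"
    then have "D = UNIV" by auto
    then show False using bD not_bounded_UNIV by metis
  qed
  obtain y where y: "y \<in> - D" "infdist x (- D) = dist x y"
    using infdist_attains_inf[OF cl ne] by blast
  define r where "r = dist x y"
  have r: "r > 0" using x y(1) by (auto simp: r_def)
  have ball: "ball x r \<subseteq> D"
  proof
    fix z assume z: "z \<in> ball x r"
    show "z \<in> D"
    proof (rule ccontr)
      assume "z \<notin> D"
      then have "infdist x (- D) \<le> dist x z" by (intro infdist_le) auto
      then show False using z y(2) by (simp add: r_def)
    qed
  qed
  have "closure (ball x r) \<subseteq> closure D" using ball by (rule closure_mono)
  then have cb: "cball x r \<subseteq> closure D" using r by simp
  have seg: "closed_segment x y \<subseteq> closure D"
    by (rule order_trans[OF closed_segment_subset cb]) (auto simp: r_def dist_commute)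
  have "y \<in> closure D" using seg by auto
  then have "y \<in> frontier D" using y(1) oD by (simp add: frontier_def interior_open)
  then have uy: "u (t, y) = 0" by (rule noslip)
  have "norm (u (t, x) - u (t, y)) \<le> L * norm (x - y)"
  proof (rule differentiable_bound[where f = "\<lambda>w. u (t, w)" and f' = "\<lambda>w v. blinfun_apply (Du (t, w)) (0, v)"])
    show "convex (closed_segment x y)" by simp
    show "x \<in> closed_segment x y" "y \<in> closed_segment x y" by auto
  next
    fix w assume w: "w \<in> closed_segment x y"
    have p: "((\<lambda>w. (t, w)) has_derivative (\<lambda>v. (0, v))) (at w within closed_segment x y)"
      by (intro derivative_eq_intros) auto
    have img: "(\<lambda>w. (t, w)) ` closed_segment x y \<subseteq> {0..} \<times> closure D" using seg t by auto
    have "(u has_derivative blinfun_apply (Du (t, w))) (at (t, w) within ((\<lambda>w. (t, w)) ` closed_segment x y))"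
      by (rule has_derivative_subset[OF der img]) (use w seg t in auto)
    from has_derivative_in_compose[OF p this]
    show "((\<lambda>w. u (t, w)) has_derivative (\<lambda>v. blinfun_apply (Du (t, w)) (0, v))) (at w within closed_segment x y)" .
    show "onorm (\<lambda>v. blinfun_apply (Du (t, w)) (0, v)) \<le> L"
    proof (rule onorm_le)
      fix v :: "real^'n"
      have "norm (blinfun_apply (Du (t, w)) (0, v)) \<le> norm (Du (t, w)) * norm ((0::real), v)"
        by (rule norm_blinfun)
      also have "\<dots> = norm (Du (t, w)) * norm v" by (simp add: norm_Pair)
      also have "\<dots> \<le> L * norm v" using bnd[of w] w seg by (intro mult_right_mono) auto
      finally show "norm (blinfun_apply (Du (t, w)) (0, v)) \<le> L * norm v" .
    qed
  qed
  then show ?thesis using uy y(2) by (simp add: dist_norm)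
qed

theorem lemma1:
  fixes D :: "(real^'n) set"
    and Re We \<epsilon> :: real
    and u :: "'n stp \<Rightarrow> real^'n"
    and Du :: "'n stp \<Rightarrow> ('n stp \<Rightarrow>\<^sub>L (real^'n))"
    and D2u :: "'n stp \<Rightarrow> ('n stp \<Rightarrow>\<^sub>L ('n stp \<Rightarrow>\<^sub>L (real^'n)))"
    and p :: "'n stp \<Rightarrow> real"
    and Dp :: "'n stp \<Rightarrow> ('n stp \<Rightarrow>\<^sub>L real)"
    and \<tau> :: "'n stp \<Rightarrow> real^'n^'n"
    and D\<tau> :: "'n stp \<Rightarrow> ('n stp \<Rightarrow>\<^sub>L (real^'n^'n))"
  assumes dom: "bounded_domain D"
    and Re: "Re > 0" and We: "We > 0" and eps: "0 < \<epsilon>" "\<epsilon> < 1"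
    and reg_u: "C2_on u Du D2u ({0..} \<times> closure D)"
    and reg_p: "C1_on p Dp ({0..} \<times> closure D)"
    and reg_tau: "C1_on \<tau> D\<tau> ({0..} \<times> closure D)"
    and momentum: "\<And>t x. t \<ge> 0 \<Longrightarrow> x \<in> D \<Longrightarrow>
        Re *\<^sub>R (blinfun_apply (Du (t, x)) tdir + conv (u (t, x)) (Du (t, x)))
        = (1 - \<epsilon>) *\<^sub>R lap_vel (D2u (t, x)) - grad_scal (Dp (t, x)) + div_mat (D\<tau> (t, x))"
    and incompressible: "\<And>t x. t \<ge> 0 \<Longrightarrow> x \<in> D \<Longrightarrow> trace (grad_vel (Du (t, x))) = 0"
    and constitutive: "\<And>t x. t \<ge> 0 \<Longrightarrow> x \<in> D \<Longrightarrow>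
        blinfun_apply (D\<tau> (t, x)) tdir + conv (u (t, x)) (D\<tau> (t, x))
        = grad_vel (Du (t, x)) ** \<tau> (t, x) + \<tau> (t, x) ** transpose (grad_vel (Du (t, x)))
          - (1 / We) *\<^sub>R \<tau> (t, x)
          + (\<epsilon> / We) *\<^sub>R (grad_vel (Du (t, x)) + transpose (grad_vel (Du (t, x))))"
    and noslip: "\<And>t x. t \<ge> 0 \<Longrightarrow> x \<in> frontier D \<Longrightarrow> u (t, x) = 0"
    and spd_all: "\<And>t x. t \<ge> 0 \<Longrightarrow> x \<in> D \<Longrightarrow> spd (conformation We \<epsilon> (\<tau> (t, x)))"
    and spd0: "\<And>x. x \<in> D \<Longrightarrow> spd (conformation We \<epsilon> (\<tau> (0, x)))"
    and det0: "\<And>x. x \<in> D \<Longrightarrow> det (conformation We \<epsilon> (\<tau> (0, x))) > 1"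
  shows "\<forall>t\<ge>0. \<forall>x\<in>D. det (conformation We \<epsilon> (\<tau> (t, x))) > 1 \<and> trace (\<tau> (t, x)) > 0"
proof -
  define S where "S = {0::real..} \<times> closure D"
  define K where "K = We / \<epsilon>"
  define d where "d = real CARD('n)"
  define C where "C = d / We"
  define F where "F z = det (K *\<^sub>R \<tau> z + mat 1)" for z
  define \<Phi> where "\<Phi> p = ddet (K *\<^sub>R \<tau> (fst p) + mat 1) (K *\<^sub>R blinfun_apply (D\<tau> (fst p)) (1, snd p))"
    for p :: "'n stp \<times> (real^'n)"
  have Fconf: "det (conformation We \<epsilon> (\<tau> z)) = F z" for z by (simp add: F_def K_def conformation_def)
  have oD: "open D" and bD: "bounded D" and neD: "D \<noteq> {}" using dom by (auto simp: bounded_domain_def)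
  have derT: "\<And>z. z \<in> S \<Longrightarrow> (\<tau> has_derivative blinfun_apply (D\<tau> z)) (at z within S)"
    and cDT: "continuous_on S D\<tau>" using reg_tau by (auto simp: C1_on_def S_def)
  have derU: "\<And>z. z \<in> S \<Longrightarrow> (u has_derivative blinfun_apply (Du z)) (at z within S)"
    and cDU: "continuous_on S Du" using reg_u by (auto simp: C2_on_def C1_on_def S_def)
  have cT: "continuous_on S \<tau>" by (rule has_derivative_continuous_on[OF derT])
  have cU: "continuous_on S u" by (rule has_derivative_continuous_on[OF derU])
  have cdet: "continuous_on UNIV (det :: real^'n^'n \<Rightarrow> real)"
    by (rule has_derivative_continuous_on[OF det_has_derivative])
  have cF: "continuous_on S F"
    unfolding F_def
    by (rule continuous_on_compose2[OF cdet _ subset_UNIV])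
       (intro continuous_on_add continuous_on_scaleR continuous_on_const cT)
  have cPhi: "continuous_on (S \<times> UNIV) \<Phi>"
    unfolding \<Phi>_def by (rule Phi_cont[OF cT cDT])
  have rate: "\<Phi> ((t, x), u (t, x)) \<ge> - C * max 0 (F (t, x) - 1)" if tx: "t \<ge> 0" "x \<in> D" for t x
  proof -
    define G where "G = grad_vel (Du (t, x))"
    have "blinfun_apply (D\<tau> (t, x)) (1, u (t, x))
        = G ** \<tau> (t, x) + \<tau> (t, x) ** transpose G - (1 / We) *\<^sub>R \<tau> (t, x) + (\<epsilon> / We) *\<^sub>R (G + transpose G)"
      using constitutive[OF tx] conv_eq[of "D\<tau> (t, x)" "u (t, x)"] by (simp add: G_def)
    from const_rewrite[OF this We eps(1)]
    have e: "K *\<^sub>R blinfun_apply (D\<tau> (t, x)) (1, u (t, x)) = G ** (K *\<^sub>R \<tau> (t, x) + mat 1) + (K *\<^sub>R \<tau> (t, x) + mat 1) ** transpose G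
     - (1 / We) *\<^sub>R (K *\<^sub>R \<tau> (t, x) + mat 1) + (1 / We) *\<^sub>R mat 1" by (simp add: K_def)
    have spdA: "spd (K *\<^sub>R \<tau> (t, x) + mat 1)" using spd_all[OF tx] by (simp add: conformation_def K_def)
    have trG: "trace G = 0" using incompressible[OF tx] by (simp add: G_def)
    show ?thesis
      using rate_bound[OF spdA trG We] e by (simp add: \<Phi>_def F_def C_def d_def)
  qed
  have main: "F (t0, x0) > 1" if t0: "t0 \<ge> 0" and x0: "x0 \<in> D" for t0 x0
  proof (cases "t0 = 0")
    case True
    then show ?thesis using det0[OF x0] Fconf by simp
  next
    case False
    then have t0p: "t0 > 0" using t0 by simp
    show ?thesis
    proof (rule ccontr)
      assume "\<not> F (t0, x0) > 1"
      then have F0: "F (t0, x0) \<le> 1" by simp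
      define \<delta> where "\<delta> y = infdist y (- D)" for y
      have clD: "closed (- D)" using oD by (simp add: closed_Compl)
      have neC: "- D \<noteq> {}"
      proof
        assume "- D = {}"
        then have "D = UNIV" by auto
        then show False using bD not_bounded_UNIV by metis
      qed
      have \<delta>D: "y \<in> D" if "\<delta> y > 0" for y
        using that by (cases "y \<in> D") (auto simp: \<delta>_def)
      define r0 where "r0 = \<delta> x0"
      have r0: "r0 > 0" unfolding r0_def \<delta>_def
        by (rule infdist_pos_not_in_closed[OF clD neC]) (use x0 in auto)
      define X1 where "X1 = {0..t0} \<times> closure D"
      have X1S: "X1 \<subseteq> S" by (auto simp: X1_def S_def)
      have cX1: "compact X1" unfolding X1_def
        using bD by (intro compact_Times compact_Icc) (simp add: compact_eq_bounded_closed bounded_closure)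
      have "compact (Du ` X1)"
        by (rule compact_continuous_image[OF continuous_on_subset[OF cDU X1S] cX1])
      then obtain L where L: "L > 0" "\<And>z. z \<in> X1 \<Longrightarrow> norm (Du z) \<le> L"
        using compact_imp_bounded bounded_pos by (metis imageI)
      have ub: "norm (u (t, y)) \<le> L * \<delta> y" if "0 \<le> t" "t \<le> t0" "y \<in> D" for t y
        unfolding \<delta>_def
      proof (rule ubound[OF oD bD _ _ _ that(1,3)])
        show "\<And>z. z \<in> {0..} \<times> closure D \<Longrightarrow> (u has_derivative blinfun_apply (Du z)) (at z within {0..} \<times> closure D)"
          using derU by (simp add: S_def)
        show "\<And>x. x \<in> frontier D \<Longrightarrow> u (t, x) = 0" using noslip that(1) by blast
        show "\<And>x. x \<in> closure D \<Longrightarrow> norm (Du (t, x)) \<le> L" using L(2) that(1,2) by (auto simp: X1_def)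
      qed
      define \<rho> where "\<rho> = r0 * exp (- 2 * L * t0)"
      have \<rho>: "\<rho> > 0" using r0 by (simp add: \<rho>_def)
      have \<rho>r0: "\<rho> \<le> r0" using r0 L t0 by (simp add: \<rho>_def)
      define Kr where "Kr = {y. \<rho> \<le> \<delta> y}"
      have KrD: "Kr \<subseteq> D" using \<rho> \<delta>D by (force simp: Kr_def)
      have cKr: "compact Kr"
      proof -
        have "closed Kr" unfolding Kr_def \<delta>_def
          by (intro closed_Collect_le continuous_on_const continuous_on_infdist continuous_on_id)
        moreover have "bounded Kr" by (rule bounded_subset[OF bD KrD])
        ultimately show ?thesis by (simp add: compact_eq_bounded_closed)
      qed
      have x0K: "x0 \<in> Kr" using \<rho>r0 by (simp add: Kr_def r0_def)
      define C0 where "C0 = {0..t0} \<times> Kr"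
      have cC0: "compact C0" unfolding C0_def by (intro compact_Times compact_Icc cKr)
      have C0S: "C0 \<subseteq> S" using KrD closure_subset by (auto simp: C0_def S_def)
      have "continuous_on Kr (\<lambda>y. F (0, y))"
      proof (rule continuous_on_compose2[OF cF])
        show "continuous_on Kr (\<lambda>y. (0::real, y))" by (intro continuous_on_Pair continuous_on_const continuous_on_id)
        show "(\<lambda>y. (0::real, y)) ` Kr \<subseteq> S" using KrD closure_subset by (auto simp: S_def)
      qed
      then obtain xm where xm: "xm \<in> Kr" "\<And>y. y \<in> Kr \<Longrightarrow> F (0, xm) \<le> F (0, y)"
        using continuous_attains_inf[OF cKr _] x0K by blast
      define c where "c = F (0, xm) - 1"
      have c: "c > 0" using det0[of xm] xm(1) KrD Fconf by (auto simp: c_def)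
      have "compact (u ` C0)"
        by (rule compact_continuous_image[OF continuous_on_subset[OF cU C0S] cC0])
      then obtain U where U: "U > 0" "\<And>z. z \<in> C0 \<Longrightarrow> norm (u z) \<le> U"
        using compact_imp_bounded bounded_pos by (metis imageI)
      define W where "W = C0 \<times> cball (0::real^'n) U"
      have cW: "compact W" unfolding W_def by (intro compact_Times cC0 compact_cball)
      have "continuous_on W \<Phi>" by (rule continuous_on_subset[OF cPhi]) (use C0S in \<open>auto simp: W_def\<close>)
      then have ucW: "uniformly_continuous_on W \<Phi>" using cW compact_uniformly_continuous by blast
      have C0: "C \<ge> 0" using We by (simp add: C_def d_def)
      define \<epsilon>1 where "\<epsilon>1 = c / (2 * (t0 + 1) * exp (C * t0))"
      have \<epsilon>1: "\<epsilon>1 > 0" using c t0 by (simp add: \<epsilon>1_def)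
      obtain \<delta>1 where \<delta>1: "\<delta>1 > 0" "\<And>p p'. p \<in> W \<Longrightarrow> p' \<in> W \<Longrightarrow> dist p' p < \<delta>1 \<Longrightarrow> dist (\<Phi> p') (\<Phi> p) < \<epsilon>1"
        using ucW \<epsilon>1 unfolding uniformly_continuous_on_def by metis
      define M0 where "M0 = 2 * L + (1 + U) / \<delta>1"
      have M0a: "(1 + U) / \<delta>1 > 0" using U \<delta>1 by (simp add: divide_pos_pos)
      have M0: "M0 > 0" using L M0a by (simp add: M0_def)
      obtain n :: nat where n: "t0 * M0 < real n" using reals_Archimedean2 by blast
      define N where "N = Suc n"
      have N: "t0 * M0 < real N" using n by (simp add: N_def)
      define h where "h = t0 / real N"
      have h: "h > 0" using t0p by (simp add: h_def N_def)
      have hN: "real N * h = t0" by (simp add: h_def N_def)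
      have hM0: "h * M0 < 1" using N h M0 t0p by (simp add: h_def N_def field_simps)
      have hL: "h * L \<le> 1/2"
      proof -
        have "h * (2 * L) \<le> h * M0" using h M0a by (intro mult_left_mono) (auto simp: M0_def)
        then show ?thesis using hM0 by simp
      qed
      have hU: "h * (1 + U) < \<delta>1"
      proof -
        have "h * ((1 + U) / \<delta>1) \<le> h * M0" using h L by (intro mult_left_mono) (auto simp: M0_def)
        then have "h * (1 + U) / \<delta>1 < 1" using hM0 by simp
        then show ?thesis using \<delta>1 by (simp add: field_simps)
      qed
      \<comment> \<open>the backward Euler polygon\<close>
      define tk where "tk k = t0 - real k * h" for k :: nat
      define xs where "xs = rec_nat x0 (\<lambda>k y. y - h *\<^sub>R u (tk k, y))"
      have xs0: "xs 0 = x0" by (simp add: xs_def)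
      have xsS: "xs (Suc k) = xs k - h *\<^sub>R u (tk k, xs k)" for k by (simp add: xs_def)
      have tkr: "0 \<le> tk k \<and> tk k \<le> t0" if "k \<le> N" for k
      proof -
        have "real k * h \<le> real N * h" using that h by (intro mult_right_mono) auto
        then show ?thesis using hN h by (simp add: tk_def)
      qed
      have tkS: "tk (Suc k) = tk k - h" for k by (simp add: tk_def algebra_simps)
      have segd: "\<delta> (xs k - (s * h) *\<^sub>R u (tk k, xs k)) \<ge> (1 - h * L) * \<delta> (xs k)"
        if k: "k < N" and xD: "xs k \<in> D" and s: "0 \<le> s" "s \<le> 1" for k s
      proof -
        have nu: "norm (u (tk k, xs k)) \<le> L * \<delta> (xs k)" using ub tkr[of k] k xD by auto
        have f1: "\<delta> (xs k) \<le> \<delta> (xs k - (s * h) *\<^sub>R u (tk k, xs k)) + dist (xs k) (xs k - (s * h) *\<^sub>R u (tk k, xs k))"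
          unfolding \<delta>_def by (rule infdist_triangle)
        have f2: "dist (xs k) (xs k - (s * h) *\<^sub>R u (tk k, xs k)) = s * h * norm (u (tk k, xs k))"
          using s h by (simp add: dist_norm)
        have f3: "s * h * norm (u (tk k, xs k)) \<le> 1 * h * (L * \<delta> (xs k))"
          using s h nu by (intro mult_mono) auto
        have f4: "(1 - h * L) * \<delta> (xs k) = \<delta> (xs k) - 1 * h * (L * \<delta> (xs k))" by (simp add: algebra_simps)
        show ?thesis unfolding f4 using f1 f2 f3 by linarith
      qed
      have ind1: "k \<le> N \<Longrightarrow> \<delta> (xs k) \<ge> r0 * (1 - h * L) ^ k" for k
      proof (induction k)
        case 0 then show ?case by (simp add: xs0 r0_def)
      next
        case (Suc k)
        then have IH: "\<delta> (xs k) \<ge> r0 * (1 - h * L) ^ k" and kN: "k < N" by auto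
        have "r0 * (1 - h * L) ^ k > 0" using r0 hL by simp
        then have xD: "xs k \<in> D" using IH \<delta>D by simp
        have "\<delta> (xs (Suc k)) \<ge> (1 - h * L) * \<delta> (xs k)" using segd[OF kN xD, of 1] by (simp add: xsS)
        moreover have "(1 - h * L) * \<delta> (xs k) \<ge> (1 - h * L) * (r0 * (1 - h * L) ^ k)"
          using IH hL by (intro mult_left_mono) auto
        ultimately show ?case by (simp add: algebra_simps)
      qed
      have pw: "(1 - h * L) ^ k \<ge> exp (- 2 * L * t0)" if "k \<le> N" for k
      proof -
        have "- (h * L) - 2 * (h * L)^2 \<le> ln (1 - h * L)"
          using hL h L by (intro ln_one_minus_pos_lower_bound) auto
        moreover have "- 2 * (h * L) \<le> - (h * L) - 2 * (h * L)^2"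
          using hL h L by (simp add: power2_eq_square)
        ultimately have "- 2 * (h * L) \<le> ln (1 - h * L)" by linarith
        then have "exp (- 2 * (h * L)) \<le> exp (ln (1 - h * L))" by (simp only: exp_le_cancel_iff)
        also have "\<dots> = 1 - h * L" using hL by simp
        finally have e1: "exp (- 2 * (h * L)) \<le> 1 - h * L" .
        have "exp (- 2 * L * t0) = exp (- 2 * (h * L)) ^ N"
          using hN by (simp add: exp_of_nat_mult[symmetric] algebra_simps)
        also have "\<dots> \<le> (1 - h * L) ^ N" by (intro power_mono e1) simp
        also have "\<dots> \<le> (1 - h * L) ^ k" using that hL h L by (intro power_decreasing) auto
        finally show ?thesis .
      qed
      have xsK: "xs k \<in> Kr" if "k \<le> N" for k
      proof -
        have "r0 * exp (- 2 * L * t0) \<le> r0 * (1 - h * L) ^ k" using pw[OF that] r0 by simp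
        then show ?thesis using ind1[OF that] by (simp add: Kr_def \<rho>_def)
      qed
      have segK: "xs k - (s * h) *\<^sub>R u (tk k, xs k) \<in> Kr" if k: "k < N" and s: "0 \<le> s" "s \<le> 1" for k s
      proof -
        have xD: "xs k \<in> D" using xsK[of k] k KrD by auto
        have "(1 - h * L) * \<delta> (xs k) \<ge> (1 - h * L) * (r0 * (1 - h * L) ^ k)"
          using ind1[of k] k hL by (intro mult_left_mono) auto
        moreover have "(1 - h * L) * (r0 * (1 - h * L) ^ k) = r0 * (1 - h * L) ^ Suc k" by simp
        moreover have "r0 * exp (- 2 * L * t0) \<le> r0 * (1 - h * L) ^ Suc k" using pw[of "Suc k"] k r0 by simp
        ultimately show ?thesis using segd[OF k xD s] by (simp add: Kr_def \<rho>_def)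
      qed
      define e where "e k = max 0 (F (tk k, xs k) - 1)" for k
      have ind2: "k \<le> N \<Longrightarrow> e k \<le> real k * h * \<epsilon>1 * (1 + h * C) ^ k" for k
      proof (induction k)
        case 0 then show ?case using F0 by (simp add: e_def tk_def xs0)
      next
        case (Suc k)
        then have IH: "e k \<le> real k * h * \<epsilon>1 * (1 + h * C) ^ k" and kN: "k < N" by auto
        define a where "a = (tk k, xs k)"
        define v where "v = (- h) *\<^sub>R ((1::real), u a)"
        have aC0: "a \<in> C0" using tkr[of k] kN xsK[of k] by (auto simp: a_def C0_def)
        have pt: "a + s *\<^sub>R v = (tk k - s * h, xs k - (s * h) *\<^sub>R u (tk k, xs k))" for s
          by (simp add: a_def v_def algebra_simps)
        have segC0: "a + s *\<^sub>R v \<in> C0" if "s \<in> {0..1}" for s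
        proof -
          have "tk k - s * h \<ge> tk k - h" using that h by (simp add: mult_left_le_one_le)
          then have "tk k - s * h \<ge> 0" using tkr[of "Suc k"] kN tkS[of k] by simp
          moreover have "tk k - s * h \<le> t0"
          proof -
            have "0 \<le> s * h" using that h by simp
            then show ?thesis using tkr[of k] kN by linarith
          qed
          ultimately show ?thesis unfolding pt using segK[OF kN, of s] that by (auto simp: C0_def)
        qed
        obtain s where s: "s \<in> {0..1}" and mvt: "det (K *\<^sub>R \<tau> (a + v) + mat 1) - det (K *\<^sub>R \<tau> a + mat 1)
            = ddet (K *\<^sub>R \<tau> (a + s *\<^sub>R v) + mat 1) (K *\<^sub>R blinfun_apply (D\<tau> (a + s *\<^sub>R v)) v)"
          using mvt_F[of S \<tau> D\<tau> a v K] derT segC0 C0S by blast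
        define c' where "c' = a + s *\<^sub>R v"
        have c'C0: "c' \<in> C0" using segC0[OF s] by (simp add: c'_def)
        have av: "a + v = (tk (Suc k), xs (Suc k))" using pt[of 1] by (simp add: tkS xsS a_def)
        have eqK: "K *\<^sub>R blinfun_apply (D\<tau> c') v = (- h) *\<^sub>R (K *\<^sub>R blinfun_apply (D\<tau> c') (1, u a))"
          unfolding v_def blinfun.scaleR_right by (rule scaleR_left_commute)
        have "F (a + v) - F a = ddet (K *\<^sub>R \<tau> c' + mat 1) ((- h) *\<^sub>R (K *\<^sub>R blinfun_apply (D\<tau> c') (1, u a)))"
          using mvt[folded c'_def, unfolded eqK] unfolding F_def .
        also have "\<dots> = - h * \<Phi> (c', u a)" by (simp only: ddet_scale \<Phi>_def fst_conv snd_conv)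
        finally have Fstep: "F (tk (Suc k), xs (Suc k)) - F a = - h * \<Phi> (c', u a)" unfolding av .
        have uaU: "norm (u a) \<le> U" using U(2)[OF aC0] .
        have W1: "(c', u a) \<in> W" "(a, u a) \<in> W" using c'C0 aC0 uaU by (auto simp: W_def)
        have "dist (c', u a) (a, u a) = norm (s *\<^sub>R v)" by (simp add: dist_Pair_Pair c'_def dist_norm)
        also have "\<dots> \<le> norm v" using s by (auto intro: mult_left_le_one_le)
        also have "\<dots> = h * norm ((1::real), u a)" using h unfolding v_def norm_scaleR by simp
        also have "\<dots> \<le> h * (1 + U)"
          using h uaU norm_Pair_le[of "1::real" "u a"] by (intro mult_left_mono) auto
        also have "\<dots> < \<delta>1" by (rule hU)
        finally have "dist (\<Phi> (c', u a)) (\<Phi> (a, u a)) < \<epsilon>1" using \<delta>1(2)[OF W1(2) W1(1)] by blast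
        then have Phic: "\<Phi> (c', u a) \<ge> \<Phi> (a, u a) - \<epsilon>1" by (simp add: dist_real_def)
        have xD: "xs k \<in> D" using xsK[of k] kN KrD by auto
        have Rate: "\<Phi> (a, u a) \<ge> - C * e k" using rate[of "tk k" "xs k"] tkr[of k] kN xD
          by (simp add: a_def e_def)
        have "F (tk (Suc k), xs (Suc k)) \<le> F a + h * (C * e k) + h * \<epsilon>1"
        proof -
          have "h * \<Phi> (c', u a) \<ge> h * (- C * e k - \<epsilon>1)" using Phic Rate h by (intro mult_left_mono) auto
          then show ?thesis using Fstep by (simp add: algebra_simps)
        qed
        moreover have "F a - 1 \<le> e k" "e k \<ge> 0" by (auto simp: e_def a_def)
        ultimately have ek: "e (Suc k) \<le> (1 + h * C) * e k + h * \<epsilon>1"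
          using h C0 \<epsilon>1 by (simp add: e_def algebra_simps)
        have p1: "(1 + h * C) ^ Suc k \<ge> 1" by (rule one_le_power) (use h C0 in simp)
        have "(1 + h * C) * e k \<le> (1 + h * C) * (real k * h * \<epsilon>1 * (1 + h * C) ^ k)"
          using IH h C0 by (intro mult_left_mono) auto
        also have "\<dots> = real k * h * \<epsilon>1 * (1 + h * C) ^ Suc k" by (simp add: algebra_simps)
        finally have A1: "(1 + h * C) * e k \<le> real k * h * \<epsilon>1 * (1 + h * C) ^ Suc k" .
        have A2: "h * \<epsilon>1 \<le> h * \<epsilon>1 * (1 + h * C) ^ Suc k"
          using mult_left_mono[OF p1, of "h * \<epsilon>1"] h \<epsilon>1 by simp
        show ?case using ek A1 A2 by (simp add: algebra_simps)
      qed
      have "e N \<le> real N * h * \<epsilon>1 * (1 + h * C) ^ N" using ind2 by simp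
      also have "\<dots> = t0 * \<epsilon>1 * (1 + h * C) ^ N" using hN by simp
      also have "\<dots> \<le> t0 * \<epsilon>1 * exp (C * t0)"
      proof -
        have "(1 + h * C) ^ N \<le> exp (h * C) ^ N" using h C0 by (intro power_mono) auto
        also have "\<dots> = exp (C * t0)" using hN by (simp add: exp_of_nat_mult[symmetric] algebra_simps)
        finally show ?thesis using t0 \<epsilon>1 by (intro mult_left_mono) auto
      qed
      also have "\<dots> = c * t0 / (2 * (t0 + 1))"
      proof -
        have t1: "t0 + 1 > 0" using t0 by simp
        have "\<epsilon>1 * exp (C * t0) = c / (2 * (t0 + 1))"
          unfolding \<epsilon>1_def by simp
        then show ?thesis by (simp add: mult.assoc)
      qed
      also have "\<dots> < c"
      proof -
        have b: "2 * (t0 + 1) > 0" using t0 by simp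
        have "c * t0 < c * (2 * (t0 + 1))" by (rule mult_strict_left_mono) (use c t0 in auto)
        then show ?thesis using pos_divide_less_eq[OF b, of "c * t0" c] by metis
      qed
      finally have eN: "e N < c" .
      have "tk N = 0" using hN by (simp add: tk_def)
      then have "e N \<ge> c" using xm(2)[OF xsK[of N]] by (simp add: e_def c_def)
      then show False using eN by simp
    qed
  qed
  show ?thesis
  proof (intro allI impI ballI conjI)
    fix t :: real and x assume t: "t \<ge> 0" and x: "x \<in> D"
    show det1: "det (conformation We \<epsilon> (\<tau> (t, x))) > 1" using main[OF t x] Fconf by simp
    define A where "A = conformation We \<epsilon> (\<tau> (t, x))"
    have "det A > 0 \<and> trace A \<ge> d * det A powr (1 / d)"
      using spd_amgm[OF spd_all[OF t x]] by (simp add: A_def d_def)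
    moreover have "det A powr (1 / d) > 1" using det1 by (simp add: A_def d_def)
    moreover have "d > 0" by (simp add: d_def)
    ultimately have "d * 1 < d * det A powr (1 / d)" "trace A \<ge> d * det A powr (1 / d)"
      by (auto intro!: mult_strict_left_mono)
    then have "trace A > d" by linarith
    moreover have "trace A = K * trace (\<tau> (t, x)) + d"
      by (simp add: A_def conformation_def trace_add trace_scaleR trace_I K_def d_def)
    ultimately have "K * trace (\<tau> (t, x)) > 0" by simp
    moreover have "K > 0" using We eps by (simp add: K_def)
    ultimately show "trace (\<tau> (t, x)) > 0" by (simp add: zero_less_mult_iff)
  qed
qed

end
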